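(* Let $c \in \mathbb{Z}$ with $c \equiv 1 \pmod 4$. Fix an algebraic closure $\overline{\mathbb{Q}}_2$ of $\mathbb{Q}_2$, an element $\delta \in \overline{\mathbb{Q}}_2$ with $\delta^2 = -c$, and elements $\alpha, \beta \in \overline{\mathbb{Q}}_2$ with $\alpha^2 = -c + \delta$ and $\beta^2 = -c - \delta$. Let $L_c = \mathbb{Q}_2(\alpha,\beta)$ (the splitting field over $\mathbb{Q}_2$ of $(x^2+c)^2+c$), and let $v_\pi$ be the valuation on $L_c$ normalized so that $v_\pi(2) = 8$. Then $v_\pi(\alpha + \alpha\beta + \beta) = 6$.
   Context: For $c \equiv 1 \pmod 4$, the extension $L_c/\mathbb{Q}_2$ is totally ramified of degree $8$, so $v_\pi$ is the normalized valuation associated to a uniformizer $\pi$ of $L_c$, and $v_\pi(x) = 8 v_2(x)$ where $v_2$ is the $2$-adic valuation extended to $\overline{\mathbb{Q}}_2$. *)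

theory Defs
  imports Complex_Main
begin

definition nonarch_valuation :: "('a::field \<Rightarrow> real) \<Rightarrow> bool" where
  "nonarch_valuation v \<longleftrightarrow>
     (\<forall>x y. x \<noteq> 0 \<longrightarrow> y \<noteq> 0 \<longrightarrow> v (x * y) = v x + v y) \<and>
     (\<forall>x y. x \<noteq> 0 \<longrightarrow> y \<noteq> 0 \<longrightarrow> x + y \<noteq> 0 \<longrightarrow> min (v x) (v y) \<le> v (x + y))"

end

theory Submission
  imports Defs
begin

lemma nv_mult: "nonarch_valuation v \<Longrightarrow> x \<noteq> 0 \<Longrightarrow> y \<noteq> 0 \<Longrightarrow> v (x * y) = v x + v y"
  unfolding nonarch_valuation_def by blast

lemma nv_ultra: "nonarch_valuation v \<Longrightarrow> x \<noteq> 0 \<Longrightarrow> y \<noteq> 0 \<Longrightarrow> x + y \<noteq> 0 \<Longrightarrow> min (v x) (v y) \<le> v (x + y)"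
  unfolding nonarch_valuation_def by blast

lemma nv_one: "nonarch_valuation v \<Longrightarrow> v (1::'a::field) = 0"
  using nv_mult[of v "1::'a" 1] by simp

lemma nv_neg1: "nonarch_valuation v \<Longrightarrow> v (-1::'a::field) = 0"
  using nv_mult[of v "-1::'a" "-1"] nv_one[of v] by simp

lemma nv_neg: "nonarch_valuation v \<Longrightarrow> (x::'a::field) \<noteq> 0 \<Longrightarrow> v (- x) = v x"
  using nv_mult[of v "-1::'a" x] nv_neg1[of v] by simp

lemma nv_sq: "nonarch_valuation v \<Longrightarrow> (x::'a::field) \<noteq> 0 \<Longrightarrow> v (x^2) = 2 * v x"
  using nv_mult[of v x x] by (simp add: power2_eq_square)

lemma nv_strict:
  assumes v: "nonarch_valuation v" and x: "(x::'a::field) \<noteq> 0" and y: "y \<noteq> 0" and lt: "v x < v y"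
  shows "x + y \<noteq> 0 \<and> v (x + y) = v x"
proof -
  have xy: "x + y \<noteq> 0"
  proof
    assume "x + y = 0" then have "y = - x" by (metis add.commute add_eq_0_iff)
    then show False using lt nv_neg[OF v x] by simp
  qed
  have 1: "min (v x) (v y) \<le> v (x + y)" using nv_ultra[OF v x y xy] .
  have 2: "min (v (x+y)) (v (-y)) \<le> v x"
    using nv_ultra[OF v xy, of "-y"] y x by simp
  show ?thesis using xy 1 2 lt nv_neg[OF v y] by linarith
qed

lemma nv_G:
  assumes v: "nonarch_valuation v" and x: "(x::'a::field) \<noteq> 0" and y: "y \<noteq> 0" and d: "x - y \<noteq> 0"
    and s: "v x + v y = 2 * t" and g: "v (x - y) \<ge> t"
  shows "v x = t"
proof (rule ccontr)
  assume ne: "v x \<noteq> t"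
  have my: "- y \<noteq> 0" using y by simp
  show False
  proof (cases "v x < v y")
    case True
    then have "v x < v (-y)" using nv_neg[OF v y] by simp
    from nv_strict[OF v x my this] have "v (x - y) = v x" by simp
    then show False using True s g by linarith
  next
    case False
    then have "v y < v x" using ne s by linarith
    then have "v (-y) < v x" using nv_neg[OF v y] by simp
    from nv_strict[OF v my x this] have "v (x - y) = v (-y)" by (simp add: add.commute)
    then show False using \<open>v y < v x\<close> s g nv_neg[OF v y] by linarith
  qed
qed

lemma nv_nat_nonneg:
  assumes v: "nonarch_valuation v"
  shows "n \<noteq> 0 \<Longrightarrow> v (of_nat n :: 'a::field_char_0) \<ge> 0"
proof (induction n)
  case 0 then show ?case by simp
next
  case (Suc n)
  show ?case
  proof (cases "n = 0")
    case True then show ?thesis using nv_one[OF v] by simp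
  next
    case False
    have "min (v (of_nat n :: 'a)) (v 1) \<le> v (of_nat n + 1 :: 'a)"
      by (rule nv_ultra[OF v]) (use False of_nat_neq_0[of n, where 'a='a] in \<open>auto simp: add.commute\<close>)
    then show ?thesis using Suc False nv_one[OF v] by (simp add: add.commute)
  qed
qed

lemma nv_int_nonneg:
  assumes v: "nonarch_valuation v" and n: "n \<noteq> 0"
  shows "v (of_int n :: 'a::field_char_0) \<ge> 0"
proof (cases "n \<ge> 0")
  case True
  then have "(of_int n :: 'a) = of_nat (nat n)" by simp
  then show ?thesis using nv_nat_nonneg[OF v, of "nat n"] n True by simp
next
  case False
  then have "(of_int n :: 'a) = - of_nat (nat (-n))" by simp
  moreover have "(of_nat (nat (-n)) :: 'a) \<noteq> 0" using False by simp
  ultimately show ?thesis using nv_nat_nonneg[OF v, of "nat (-n)"] nv_neg[OF v] False by simp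
qed

lemma nv_two_mult:
  assumes v: "nonarch_valuation v" and v2: "v 2 = 8" and k: "k \<noteq> 0"
  shows "v (of_int (2 * k) :: 'a::field_char_0) = 8 + v (of_int k)"
proof -
  have "(of_int (2*k) :: 'a) = 2 * of_int k" by simp
  then show ?thesis using nv_mult[OF v, of "2::'a" "of_int k"] k v2 by simp
qed

lemma nv_odd:
  assumes v: "nonarch_valuation v" and v2: "v (2::'a::field_char_0) = 8" and o: "odd n"
  shows "v (of_int n :: 'a) = 0"
proof -
  obtain k where nk: "n = 2 * k + 1" using o by (metis oddE)
  have n0: "n \<noteq> 0" using o by auto
  have ge: "v (of_int n :: 'a) \<ge> 0" by (rule nv_int_nonneg[OF v n0])
  show ?thesis
  proof (cases "k = 0")
    case True then show ?thesis using nk nv_one[OF v] by simp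
  next
    case False
    show ?thesis
    proof (rule ccontr)
      assume "v (of_int n :: 'a) \<noteq> 0"
      then have pos: "v (of_int n :: 'a) > 0" using ge by simp
      have a: "v (of_int (2*k) :: 'a) \<ge> 8" using nv_two_mult[OF v v2 False] nv_int_nonneg[OF v False] by simp
      have eq: "(1::'a) = of_int n + (- of_int (2*k))" using nk by simp
      have "min (v (of_int n :: 'a)) (v (- of_int (2*k) :: 'a)) \<le> v (of_int n + (- of_int (2*k)) :: 'a)"
        by (rule nv_ultra[OF v]) (use n0 False eq in auto)
      then show False using eq nv_one[OF v] pos a nv_neg[OF v, of "of_int (2*k) :: 'a"] False by simp
    qed
  qed
qed

theorem lemma7p1:
  fixes c :: int and v :: "'a::field_char_0 \<Rightarrow> real" and \<delta> \<alpha> \<beta> :: 'a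
  assumes "c mod 4 = 1"
    and "nonarch_valuation v"
    and "v 2 = 8"
    and "\<delta>\<^sup>2 = - of_int c"
    and "\<alpha>\<^sup>2 = - of_int c + \<delta>"
    and "\<beta>\<^sup>2 = - of_int c - \<delta>"
  shows "\<alpha> + \<alpha> * \<beta> + \<beta> \<noteq> 0 \<and> v (\<alpha> + \<alpha> * \<beta> + \<beta>) = 6"
proof -
  note v = assms(2) and v2 = assms(3)
  define p where "p = \<alpha> * \<beta>"
  define s where "s = \<alpha> + \<beta>"
  have codd: "odd c" using assms(1) by presburger
  have vc: "v (of_int c :: 'a) = 0" by (rule nv_odd[OF v v2 codd])
  have c0: "(of_int c :: 'a) \<noteq> 0" using codd by auto
  obtain m where m: "c + 1 = 2 * m" and modd: "odd m"
  proof -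
    have "c + 1 = 2 * ((c + 1) div 2)" using codd by presburger
    moreover have "odd ((c+1) div 2)" using assms(1) by presburger
    ultimately show ?thesis using that by blast
  qed
  have m0: "m \<noteq> 0" using modd by auto
  have vc1: "v (of_int (c + 1) :: 'a) = 8"
    using m nv_two_mult[OF v v2 m0] nv_odd[OF v v2 modd] by simp
  have c10: "(of_int (c+1) :: 'a) \<noteq> 0" using m m0 by simp
  have pp: "p^2 = of_int c * of_int (c+1)"
  proof -
    have "p^2 = \<alpha>^2 * \<beta>^2" by (simp add: p_def power_mult_distrib)
    also have "\<dots> = (- of_int c + \<delta>) * (- of_int c - \<delta>)" using assms(5,6) by simp
    also have "\<dots> = (of_int c)^2 - \<delta>^2" by (simp add: algebra_simps power2_eq_square)
    also have "\<dots> = of_int c * of_int (c+1)" using assms(4) by (simp add: algebra_simps power2_eq_square)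
    finally show ?thesis .
  qed
  have p0: "p \<noteq> 0" using pp c0 c10 by auto
  have vp: "v p = 4" using pp nv_sq[OF v p0] nv_mult[OF v c0 c10] vc vc1 by simp
  have vmc: "v (- of_int c :: 'a) = 0" using nv_neg[OF v c0] vc by simp
  have mc0: "(- of_int c :: 'a) \<noteq> 0" using c0 by simp
  have pc: "p + (- of_int c) \<noteq> 0 \<and> v (p + (- of_int c)) = 0"
    using nv_strict[OF v mc0 p0] vmc vp by (simp add: add.commute)
  have ss: "s^2 = 2 * (p + (- of_int c))"
  proof -
    have "s^2 = \<alpha>^2 + \<beta>^2 + 2 * p" by (simp add: s_def p_def power2_eq_square algebra_simps)
    then show ?thesis using assms(5,6) by (simp add: algebra_simps)
  qed
  have s0: "s \<noteq> 0" using ss pc by auto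
  have vs: "v s = 4" using ss nv_sq[OF v s0] nv_mult[OF v, of 2 "p + (- of_int c)"] pc v2 by simp
  have prod: "(s + p) * (s - p) = 2 * p - of_int (c * (c + 3))"
    using ss pp by (simp add: algebra_simps power2_eq_square)
  have v2p: "v (2 * p) = 12" using nv_mult[OF v, of 2 p] p0 v2 vp by simp
  have p20: "2 * p \<noteq> 0" using p0 by simp
  have prod_v: "2 * p - of_int (c * (c + 3)) \<noteq> 0 \<and> v (2 * p - of_int (c * (c + 3))) = 12"
  proof (cases "c + 3 = 0")
    case True then show ?thesis using p20 v2p by simp
  next
    case False
    obtain k where k: "c + 3 = 4 * k"
    proof -
      have "c + 3 = 4 * ((c + 3) div 4)" using assms(1) by presburger
      then show ?thesis using that by blast
    qed
    have k0: "k \<noteq> 0" using False k by simp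
    have 4: "(of_int (c + 3) :: 'a) = 2 * (2 * of_int k)" using k by simp
    have "v (of_int (c + 3) :: 'a) = 16 + v (of_int k :: 'a)"
      using 4 nv_mult[OF v, of 2 "2 * of_int k"] nv_mult[OF v, of 2 "of_int k"] k0 v2 by simp
    then have vc3: "v (of_int (c + 3) :: 'a) \<ge> 16" using nv_int_nonneg[OF v k0] by simp
    have c30: "(of_int (c+3) :: 'a) \<noteq> 0" using False of_int_eq_0_iff by blast
    have vcc: "v (of_int (c * (c + 3)) :: 'a) \<ge> 16"
      using nv_mult[OF v c0 c30] vc vc3 by simp
    have cc0: "(of_int (c * (c + 3)) :: 'a) \<noteq> 0" using c0 c30 by simp
    have "v (2*p) < v (- of_int (c * (c + 3)) :: 'a)" using vcc nv_neg[OF v cc0] v2p by simp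
    from nv_strict[OF v p20 _ this] cc0 v2p show ?thesis by simp
  qed
  have sp0: "s + p \<noteq> 0" and smp0: "s - p \<noteq> 0" using prod prod_v by auto
  have vprod: "v (s + p) + v (s - p) = 2 * 6"
    using nv_mult[OF v sp0 smp0] prod prod_v by simp
  have d: "(s + p) - (s - p) = 2 * p" by simp
  have "v (s + p) = 6"
    by (rule nv_G[OF v sp0 smp0 _ vprod]) (use d p20 v2p in simp_all)
  moreover have "\<alpha> + \<alpha> * \<beta> + \<beta> = s + p" by (simp add: s_def p_def)
  ultimately show ?thesis using sp0 by simp
qed

end
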